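(* Let $(X,d^\star)$ be a $\star$-metric space and $A\subseteq X$. Then the closure of $A$ in $(X,\mathscr{T}_{d^\star})$ equals $\{x\in X: D(A,x)=0\}$.
   Context: A $t$-definer is a function $\star:[0,\infty)\times[0,\infty)\to[0,\infty)$ such that for all $a,b,c\ge 0$: $a\star b=b\star a$; $a\star(b\star c)=(a\star b)\star c$; if $a\le b$ then $a\star c\le b\star c$; $a\star 0=a$; and $\star$ is continuous in its first variable with respect to the Euclidean topology. Given a nonempty set $X$ and a $t$-definer $\star$, a $\star$-metric on $X$ is a function $d^\star:X\times X\to[0,\infty)$ such that for all $x,y,z\in X$: $d^\star(x,y)=0$ iff $x=y$; $d^\star(x,y)=d^\star(y,x)$; and $d^\star(x,y)\le d^\star(x,z)\star d^\star(z,y)$. Put $B_{d^\star}(a,r)=\{x\in X: d^\star(a,x)<r\}$ and let $\mathscr{T}_{d^\star}$ be the topology consisting of all $U\subseteq X$ such that for each $a\in U$ some $B_{d^\star}(a,r)$, $r>0$, is contained in $U$. The distance from a point to a set is $D(A,x)=D(x,A)=\inf_{y\in A}d^\star(x,y)$ if $A\ne\emptyset$, and $D(\emptyset,x)=1$. *)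

theory Defs
  imports "HOL-Analysis.Analysis"
begin

definition t_definer :: "(real \<Rightarrow> real \<Rightarrow> real) \<Rightarrow> bool" where
  "t_definer s \<longleftrightarrow>
     (\<forall>a\<ge>0. \<forall>b\<ge>0. s a b \<ge> 0) \<and>
     (\<forall>a\<ge>0. \<forall>b\<ge>0. s a b = s b a) \<and>
     (\<forall>a\<ge>0. \<forall>b\<ge>0. \<forall>c\<ge>0. s a (s b c) = s (s a b) c) \<and>
     (\<forall>a\<ge>0. \<forall>b\<ge>0. \<forall>c\<ge>0. a \<le> b \<longrightarrow> s a c \<le> s b c) \<and>
     (\<forall>a\<ge>0. s a 0 = a) \<and>
     (\<forall>c\<ge>0. continuous_on {0..} (\<lambda>a. s a c))"

definition star_metric :: "(real \<Rightarrow> real \<Rightarrow> real) \<Rightarrow> 'a set \<Rightarrow> ('a \<Rightarrow> 'a \<Rightarrow> real) \<Rightarrow> bool" where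
  "star_metric s X d \<longleftrightarrow>
     (\<forall>x\<in>X. \<forall>y\<in>X. d x y \<ge> 0) \<and>
     (\<forall>x\<in>X. \<forall>y\<in>X. d x y = 0 \<longleftrightarrow> x = y) \<and>
     (\<forall>x\<in>X. \<forall>y\<in>X. d x y = d y x) \<and>
     (\<forall>x\<in>X. \<forall>y\<in>X. \<forall>z\<in>X. d x y \<le> s (d x z) (d z y))"

definition star_ball :: "'a set \<Rightarrow> ('a \<Rightarrow> 'a \<Rightarrow> real) \<Rightarrow> 'a \<Rightarrow> real \<Rightarrow> 'a set" where
  "star_ball X d a r = {x\<in>X. d a x < r}"

definition star_topology :: "'a set \<Rightarrow> ('a \<Rightarrow> 'a \<Rightarrow> real) \<Rightarrow> 'a topology" where
  "star_topology X d = topology (\<lambda>U. U \<subseteq> X \<and> (\<forall>a\<in>U. \<exists>r>0. star_ball X d a r \<subseteq> U))"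

definition star_dist_set :: "('a \<Rightarrow> 'a \<Rightarrow> real) \<Rightarrow> 'a set \<Rightarrow> 'a \<Rightarrow> real" where
  "star_dist_set d A x = (if A = {} then 1 else (INF y\<in>A. d x y))"

end

theory Submission
  imports Defs
begin

lemma star_istop: "istopology (\<lambda>U. U \<subseteq> X \<and> (\<forall>a\<in>U. \<exists>r>0. star_ball X d a r \<subseteq> U))"
  unfolding istopology_def
proof (rule conjI; intro allI impI)
  fix S T assume S: "S \<subseteq> X \<and> (\<forall>a\<in>S. \<exists>r>0. star_ball X d a r \<subseteq> S)"
    and T: "T \<subseteq> X \<and> (\<forall>a\<in>T. \<exists>r>0. star_ball X d a r \<subseteq> T)"
  show "S \<inter> T \<subseteq> X \<and> (\<forall>a\<in>S \<inter> T. \<exists>r>0. star_ball X d a r \<subseteq> S \<inter> T)"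
  proof (intro conjI ballI)
    show "S \<inter> T \<subseteq> X" using S by blast
  next
    fix a assume "a \<in> S \<inter> T"
    then obtain r1 r2 where "r1 > 0" "star_ball X d a r1 \<subseteq> S" "r2 > 0" "star_ball X d a r2 \<subseteq> T"
      using S T by blast
    then show "\<exists>r>0. star_ball X d a r \<subseteq> S \<inter> T"
      by (intro exI[of _ "min r1 r2"]) (auto simp: star_ball_def)
  qed
next
  fix K assume "\<forall>k\<in>K. k \<subseteq> X \<and> (\<forall>a\<in>k. \<exists>r>0. star_ball X d a r \<subseteq> k)"
  note hK = this
  show "\<Union>K \<subseteq> X \<and> (\<forall>a\<in>\<Union>K. \<exists>r>0. star_ball X d a r \<subseteq> \<Union>K)"
  proof (intro conjI ballI)
    show "\<Union>K \<subseteq> X" using hK by auto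
  next
    fix a assume "a \<in> \<Union>K"
    then obtain k where k: "k \<in> K" "a \<in> k" by auto
    then obtain r where "r > 0" "star_ball X d a r \<subseteq> k" using hK by meson
    then show "\<exists>r>0. star_ball X d a r \<subseteq> \<Union>K" using k by auto
  qed
qed

lemma star_openin: "openin (star_topology X d) U \<longleftrightarrow> U \<subseteq> X \<and> (\<forall>a\<in>U. \<exists>r>0. star_ball X d a r \<subseteq> U)"
  unfolding star_topology_def using star_istop[of X d] by simp

lemma star_topspace: "topspace (star_topology X d) = X"
proof -
  have "openin (star_topology X d) X" unfolding star_openin
    by (auto simp: star_ball_def intro: exI[of _ 1])
  then show ?thesis unfolding topspace_def by (auto simp: star_openin)
qed

lemma ball_open:
  assumes ts: "t_definer s" and sm: "star_metric s X d" and x: "x \<in> X"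
  shows "openin (star_topology X d) (star_ball X d x r)"
  unfolding star_openin
proof (intro conjI ballI)
  show "star_ball X d x r \<subseteq> X" by (auto simp: star_ball_def)
next
  fix y assume y: "y \<in> star_ball X d x r"
  hence yX: "y \<in> X" and dxy: "d x y < r" by (auto simp: star_ball_def)
  define a where "a = d x y"
  have a0: "a \<ge> 0" using sm x yX by (auto simp: star_metric_def a_def)
  have cont: "continuous_on {0..} (\<lambda>t. s t a)" using ts a0 by (auto simp: t_definer_def)
  have s0: "s 0 a = a" using ts a0 unfolding t_definer_def by (metis order_refl)
  have "continuous (at 0 within {0..}) (\<lambda>t. s t a)"
    using cont by (simp add: continuous_on_eq_continuous_within)
  then have "\<forall>e>0. \<exists>dl>0. \<forall>t\<in>{0..}. dist t 0 < dl \<longrightarrow> dist (s t a) (s 0 a) < e"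
    unfolding continuous_within_eps_delta by blast
  moreover have "r - a > 0" using dxy a_def by simp
  ultimately obtain dl where dl0: "dl > 0" and dl1: "\<forall>t\<in>{0..}. dist t 0 < dl \<longrightarrow> dist (s t a) (s 0 a) < r - a"
    by blast
  have dl: "dl > 0" "\<And>t. t \<ge> 0 \<Longrightarrow> \<bar>t\<bar> < dl \<Longrightarrow> \<bar>s t a - a\<bar> < r - a"
    using dl0 apply simp
    using dl1 s0 by (simp add: dist_real_def)
  show "\<exists>r'>0. star_ball X d y r' \<subseteq> star_ball X d x r"
  proof (intro exI conjI)
    show "dl > 0" by fact
    show "star_ball X d y dl \<subseteq> star_ball X d x r"
    proof
      fix z assume "z \<in> star_ball X d y dl"
      hence zX: "z \<in> X" and dyz: "d y z < dl" by (auto simp: star_ball_def)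
      have t0: "d y z \<ge> 0" using sm zX yX by (auto simp: star_metric_def)
      have "d x z \<le> s (d x y) (d y z)" using sm x yX zX by (auto simp: star_metric_def)
      also have "\<dots> = s (d y z) a" using ts a0 t0 unfolding t_definer_def a_def by auto
      also have "\<dots> < r" using dl(2)[OF t0] t0 dyz by auto
      finally show "z \<in> star_ball X d x r" using zX by (auto simp: star_ball_def)
    qed
  qed
qed

theorem proposition4p7:
  fixes s :: "real \<Rightarrow> real \<Rightarrow> real" and X :: "'a set" and d :: "'a \<Rightarrow> 'a \<Rightarrow> real"
    and A :: "'a set"
  assumes "t_definer s" and "star_metric s X d" and "A \<subseteq> X"
  shows "(star_topology X d) closure_of A = {x\<in>X. star_dist_set d A x = 0}"
proof (cases "A = {}")
  case True
  then show ?thesis by (simp add: star_dist_set_def)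
next
  case ne: False
  have dnn: "\<And>x y. x \<in> X \<Longrightarrow> y \<in> X \<Longrightarrow> d x y \<ge> 0"
    using assms(2) unfolding star_metric_def by (simp only:)
  have bdd: "x \<in> X \<Longrightarrow> bdd_below ((\<lambda>y. d x y) ` A)" for x
    unfolding bdd_below_def
  proof (intro exI ballI)
    fix v assume "x \<in> X" "v \<in> (\<lambda>y. d x y) ` A"
    then obtain y where "y \<in> A" "v = d x y" by auto
    then show "0 \<le> v" using assms(3) dnn \<open>x \<in> X\<close> by auto
  qed
  have nonneg: "x \<in> X \<Longrightarrow> (INF y\<in>A. d x y) \<ge> 0" for x
  proof (rule cINF_greatest[OF ne])
    fix y assume "x \<in> X" "y \<in> A"
    then show "0 \<le> d x y" using assms(3) dnn by auto
  qed
  show ?thesis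
  proof (intro set_eqI iffI)
    fix x assume xc: "x \<in> star_topology X d closure_of A"
    hence xX: "x \<in> X" by (simp add: in_closure_of star_topspace)
    show "x \<in> {x\<in>X. star_dist_set d A x = 0}"
    proof (rule ccontr)
      assume "x \<notin> {x\<in>X. star_dist_set d A x = 0}"
      then have pos: "(INF y\<in>A. d x y) > 0" using nonneg[OF xX] xX ne
        by (auto simp: star_dist_set_def)
      let ?e = "INF y\<in>A. d x y"
      have "x \<in> star_ball X d x ?e" 
      proof -
        have "d x x = 0" using xX assms(2) unfolding star_metric_def by blast
        then show ?thesis using xX pos by (simp add: star_ball_def)
      qed
      then obtain y where y: "y \<in> A" "y \<in> star_ball X d x ?e"
        using xc ball_open[OF assms(1,2) xX, of ?e] unfolding in_closure_of by meson
      then have "d x y < ?e" by (auto simp: star_ball_def)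
      moreover have "?e \<le> d x y" using bdd[OF xX] y(1) by (rule cINF_lower)
      ultimately show False by simp
    qed
  next
    fix x assume "x \<in> {x\<in>X. star_dist_set d A x = 0}"
    hence xX: "x \<in> X" and inf0: "(INF y\<in>A. d x y) = 0" using ne by (auto simp: star_dist_set_def)
    show "x \<in> star_topology X d closure_of A"
      unfolding in_closure_of star_topspace
    proof (intro conjI allI impI xX)
      fix T assume T: "x \<in> T \<and> openin (star_topology X d) T"
      then obtain r where r: "r > 0" "star_ball X d x r \<subseteq> T" unfolding star_openin by blast
      have "(INF y\<in>A. d x y) < r" using inf0 r by simp
      then obtain y where "y \<in> A" "d x y < r" using ne bdd[OF xX] by (meson cINF_less_iff)
      then show "\<exists>y. y \<in> A \<and> y \<in> T" using r assms(3) by (auto simp: star_ball_def)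
    qed
  qed
qed

end
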